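(* Let $\vartheta$ be a primitive random substitution. If $X_\vartheta$ contains a periodic element (some $x$ with $\sigma^n(x)=x$ for some $n\ge1$), then $\operatorname{Aut}(X_\vartheta)$ is residually finite.
   Context: A random substitution on a finite alphabet $\mathcal A$ is a map $\vartheta$ from $\mathcal A$ to non-empty finite sets of non-empty words, extended to words by concatenating choices and iterated. Legal words are subwords of words in some $\vartheta^p(a)$; $X_\vartheta\subseteq\mathcal A^{\mathbb Z}$ is the set of sequences all of whose subwords are legal, with shift $\sigma(x)_i=x_{i+1}$; $\operatorname{Aut}(X_\vartheta)$ is the group of shift-commuting homeomorphisms of $X_\vartheta$. $\vartheta$ is primitive if for some $p\ge1$ every letter occurs in some word of $\vartheta^p(b)$ for every $b\in\mathcal A$. *)

theory Defs
  imports "HOL-Analysis.Function_Topology" "HOL-Algebra.Coset" "HOL-Library.Sublist"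
begin

definition random_subst :: "('a \<Rightarrow> 'a list set) \<Rightarrow> bool" where
  "random_subst \<theta> \<longleftrightarrow> (\<forall>a. \<theta> a \<noteq> {} \<and> finite (\<theta> a) \<and> (\<forall>w\<in>\<theta> a. w \<noteq> []))"

fun subst_word :: "('a \<Rightarrow> 'a list set) \<Rightarrow> 'a list \<Rightarrow> 'a list set" where
  "subst_word \<theta> [] = {[]}"
| "subst_word \<theta> (a # u) = {v @ w | v w. v \<in> \<theta> a \<and> w \<in> subst_word \<theta> u}"

fun subst_pow :: "('a \<Rightarrow> 'a list set) \<Rightarrow> nat \<Rightarrow> 'a \<Rightarrow> 'a list set" where
  "subst_pow \<theta> 0 a = {[a]}"
| "subst_pow \<theta> (Suc p) a = \<Union> (subst_word \<theta> ` subst_pow \<theta> p a)"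

definition primitive_subst :: "('a \<Rightarrow> 'a list set) \<Rightarrow> bool" where
  "primitive_subst \<theta> \<longleftrightarrow> (\<exists>p\<ge>1. \<forall>a b. \<exists>w\<in>subst_pow \<theta> p b. a \<in> set w)"

definition legal :: "('a \<Rightarrow> 'a list set) \<Rightarrow> 'a list \<Rightarrow> bool" where
  "legal \<theta> u \<longleftrightarrow> (\<exists>a p w. w \<in> subst_pow \<theta> p a \<and> sublist u w)"

definition subshift :: "('a \<Rightarrow> 'a list set) \<Rightarrow> (int \<Rightarrow> 'a) set" where
  "subshift \<theta> = {x. \<forall>(i::int) (n::nat). legal \<theta> (map (\<lambda>k. x (i + int k)) [0..<n])}"

definition shift :: "(int \<Rightarrow> 'a) \<Rightarrow> (int \<Rightarrow> 'a)" where
  "shift x = (\<lambda>i. x (i + 1))"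

definition fullshift_top :: "(int \<Rightarrow> 'a) topology" where
  "fullshift_top = product_topology (\<lambda>_. discrete_topology UNIV) UNIV"

definition automs :: "(int \<Rightarrow> 'a) set \<Rightarrow> ((int \<Rightarrow> 'a) \<Rightarrow> (int \<Rightarrow> 'a)) set" where
  "automs X = {f. homeomorphic_map (subtopology fullshift_top X) (subtopology fullshift_top X) f
                 \<and> (\<forall>x\<in>X. f (shift x) = shift (f x)) \<and> f \<in> extensional X}"

definition Aut_group :: "(int \<Rightarrow> 'a) set \<Rightarrow> ((int \<Rightarrow> 'a) \<Rightarrow> (int \<Rightarrow> 'a)) monoid" where
  "Aut_group X = \<lparr>carrier = automs X, mult = (\<lambda>f g. restrict (f \<circ> g) X), one = restrict id X\<rparr>"

definition residually_finite :: "('g, 'b) monoid_scheme \<Rightarrow> bool" where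
  "residually_finite G \<longleftrightarrow>
     (\<forall>g\<in>carrier G. g \<noteq> \<one>\<^bsub>G\<^esub> \<longrightarrow> (\<exists>N. N \<lhd> G \<and> finite (rcosets\<^bsub>G\<^esub> N) \<and> g \<notin> N))"

end

theory Submission
  imports Defs
begin


lemma topspace_T: "topspace (subtopology fullshift_top X) = X"
  by (simp add: fullshift_top_def)

lemma automsD:
  assumes "f \<in> automs X"
  shows "homeomorphic_map (subtopology fullshift_top X) (subtopology fullshift_top X) f"
    "\<And>x. x \<in> X \<Longrightarrow> f (shift x) = shift (f x)" "f \<in> extensional X"
    "f ` X = X" "inj_on f X"
proof -
  show h: "homeomorphic_map (subtopology fullshift_top X) (subtopology fullshift_top X) f"
    using assms unfolding automs_def by blast
  show "\<And>x. x \<in> X \<Longrightarrow> f (shift x) = shift (f x)" "f \<in> extensional X"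
    using assms unfolding automs_def by blast+
  show "f ` X = X" using homeomorphic_imp_surjective_map[OF h] unfolding topspace_T .
  show "inj_on f X" using homeomorphic_imp_injective_map[OF h] unfolding topspace_T .
qed

lemma autom_in: "f \<in> automs X \<Longrightarrow> x \<in> X \<Longrightarrow> f x \<in> X"
  using automsD(4) by blast

lemma Aut_simps [simp]:
  "carrier (Aut_group X) = automs X"
  "mult (Aut_group X) f g = restrict (f \<circ> g) X"
  "one (Aut_group X) = restrict id X"
  by (simp_all add: Aut_group_def)

lemma comp_autom:
  assumes "shift ` X \<subseteq> X" "f \<in> automs X" "g \<in> automs X"
  shows "restrict (f \<circ> g) X \<in> automs X"
proof -
  note F = automsD[OF assms(2)] and G = automsD[OF assms(3)]
  have "homeomorphic_map (subtopology fullshift_top X) (subtopology fullshift_top X) (f \<circ> g)"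
    using F(1) G(1) homeomorphic_map_compose by blast
  then have "homeomorphic_map (subtopology fullshift_top X) (subtopology fullshift_top X) (restrict (f \<circ> g) X)"
    by (rule homeomorphic_map_eq) (simp add: topspace_T)
  moreover have "\<forall>x\<in>X. restrict (f \<circ> g) X (shift x) = shift (restrict (f \<circ> g) X x)"
    using assms(1) F(2) G(2) autom_in[OF assms(3)] by auto
  ultimately show ?thesis unfolding automs_def by auto
qed

lemma id_autom: "shift ` X \<subseteq> X \<Longrightarrow> restrict id X \<in> automs X"
proof -
  have "homeomorphic_map (subtopology fullshift_top X) (subtopology fullshift_top X) id"
    by (simp add: homeomorphic_map_id)
  then have "homeomorphic_map (subtopology fullshift_top X) (subtopology fullshift_top X) (restrict id X)"
    by (rule homeomorphic_map_eq) (simp add: topspace_T)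
  moreover assume "shift ` X \<subseteq> X"
  ultimately show ?thesis unfolding automs_def by auto
qed

lemma inv_autom:
  assumes "shift ` X \<subseteq> X" "f \<in> automs X"
  shows "\<exists>g \<in> automs X. restrict (g \<circ> f) X = restrict id X"
proof -
  note F = automsD[OF assms(2)]
  obtain g where g: "homeomorphic_maps (subtopology fullshift_top X) (subtopology fullshift_top X) f g"
    using F(1) homeomorphic_map_maps by blast
  then have g1: "homeomorphic_map (subtopology fullshift_top X) (subtopology fullshift_top X) g"
    and g2: "\<forall>x\<in>X. g (f x) = x" and g3: "\<forall>x\<in>X. f (g x) = x"
    using g unfolding homeomorphic_maps_map topspace_T by auto
  have gX: "g x \<in> X" if "x \<in> X" for x
  proof -
    have "g ` X = X" using homeomorphic_imp_surjective_map[OF g1] unfolding topspace_T .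
    then show ?thesis using that by blast
  qed
  define h where "h = restrict g X"
  have "homeomorphic_map (subtopology fullshift_top X) (subtopology fullshift_top X) h"
    using g1 by (rule homeomorphic_map_eq) (simp add: topspace_T h_def)
  moreover have "h (shift x) = shift (h x)" if "x \<in> X" for x
  proof -
    have "f (shift (g x)) = shift x" using F(2) gX g3 that by simp
    moreover have "shift (g x) \<in> X" using assms(1) gX that by blast
    ultimately have "g (shift x) = shift (g x)" using g2 by metis
    then show ?thesis using that assms(1) by (auto simp: h_def)
  qed
  ultimately have "h \<in> automs X" unfolding automs_def h_def by auto
  moreover have "restrict (h \<circ> f) X = restrict id X"
    using g2 F(4) by (auto simp: h_def fun_eq_iff)
  ultimately show ?thesis by blast
qed

lemma Aut_group_group:
  assumes "shift ` X \<subseteq> X"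
  shows "group (Aut_group X)"
proof (rule groupI)
  fix x y z assume xyz: "x \<in> carrier (Aut_group X)" "y \<in> carrier (Aut_group X)" "z \<in> carrier (Aut_group X)"
  then show "x \<otimes>\<^bsub>Aut_group X\<^esub> y \<in> carrier (Aut_group X)" using comp_autom[OF assms] by simp
  show "x \<otimes>\<^bsub>Aut_group X\<^esub> y \<otimes>\<^bsub>Aut_group X\<^esub> z = x \<otimes>\<^bsub>Aut_group X\<^esub> (y \<otimes>\<^bsub>Aut_group X\<^esub> z)"
  proof (rule ext)
    fix t show "(x \<otimes>\<^bsub>Aut_group X\<^esub> y \<otimes>\<^bsub>Aut_group X\<^esub> z) t = (x \<otimes>\<^bsub>Aut_group X\<^esub> (y \<otimes>\<^bsub>Aut_group X\<^esub> z)) t"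
    proof (cases "t \<in> X")
      case True
      then have "z t \<in> X" using autom_in[of z X t] xyz(3) by simp
      then show ?thesis using True by simp
    qed simp
  qed
next
  show "\<one>\<^bsub>Aut_group X\<^esub> \<in> carrier (Aut_group X)" using id_autom[OF assms] by simp
next
  fix x assume x: "x \<in> carrier (Aut_group X)"
  show "\<one>\<^bsub>Aut_group X\<^esub> \<otimes>\<^bsub>Aut_group X\<^esub> x = x"
  proof (rule ext)
    fix t show "(\<one>\<^bsub>Aut_group X\<^esub> \<otimes>\<^bsub>Aut_group X\<^esub> x) t = x t"
    proof (cases "t \<in> X")
      case True
      then have "x t \<in> X" using autom_in[of x X t] x by simp
      then show ?thesis using True by simp
    next
      case False
      then show ?thesis using automsD(3)[of x X] x by (simp add: extensional_def)
    qed
  qed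
  show "\<exists>y\<in>carrier (Aut_group X). y \<otimes>\<^bsub>Aut_group X\<^esub> x = \<one>\<^bsub>Aut_group X\<^esub>"
    using inv_autom[OF assms, of x] x unfolding Aut_simps by blast
qed



lemma inv_closed_aut:
  assumes "shift ` X \<subseteq> X" "a \<in> automs X"
  shows "inv\<^bsub>Aut_group X\<^esub> a \<in> automs X"
proof -
  interpret G: group "Aut_group X" by (rule Aut_group_group[OF assms(1)])
  show ?thesis using G.inv_closed[of a] assms(2) by simp
qed

lemma inv_apply:
  assumes "shift ` X \<subseteq> X" "a \<in> automs X" "y \<in> X"
  shows "a ((inv\<^bsub>Aut_group X\<^esub> a) y) = y"
proof -
  interpret G: group "Aut_group X" by (rule Aut_group_group[OF assms(1)])
  have "a \<otimes>\<^bsub>Aut_group X\<^esub> inv\<^bsub>Aut_group X\<^esub> a = \<one>\<^bsub>Aut_group X\<^esub>"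
    using assms(2) G.r_inv[of a] by simp
  then have "restrict (a \<circ> inv\<^bsub>Aut_group X\<^esub> a) X y = restrict id X y" by simp
  then show ?thesis using assms(3) by simp
qed

lemma kernel_normal_finite:
  assumes sh: "shift ` X \<subseteq> X" and PX: "P \<subseteq> X" and fin: "finite P"
    and inv: "\<And>f y. f \<in> automs X \<Longrightarrow> y \<in> P \<Longrightarrow> f y \<in> P"
  defines "H \<equiv> {f \<in> automs X. \<forall>y\<in>P. f y = y}"
  shows "H \<lhd> Aut_group X" "finite (rcosets\<^bsub>Aut_group X\<^esub> H)"
proof -
  interpret G: group "Aut_group X" by (rule Aut_group_group[OF sh])
  have sub: "subgroup H (Aut_group X)"
  proof (rule G.subgroupI)
    show "H \<subseteq> carrier (Aut_group X)" by (auto simp: H_def)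
    have "restrict id X \<in> H" using id_autom[OF sh] PX unfolding H_def by auto
    then show "H \<noteq> {}" by blast
  next
    fix a assume a: "a \<in> H"
    show "inv\<^bsub>Aut_group X\<^esub> a \<in> H"
    proof -
      have "a \<in> automs X" using a by (simp add: H_def)
      have "(inv\<^bsub>Aut_group X\<^esub> a) y = y" if "y \<in> P" for y
      proof -
        have "(inv\<^bsub>Aut_group X\<^esub> a) y \<in> P" using inv inv_closed_aut[OF sh \<open>a \<in> automs X\<close>] that PX by blast
        then have "a ((inv\<^bsub>Aut_group X\<^esub> a) y) = (inv\<^bsub>Aut_group X\<^esub> a) y" using a by (simp add: H_def)
        then show ?thesis using inv_apply[OF sh \<open>a \<in> automs X\<close>] that PX by auto
      qed
      then show ?thesis using inv_closed_aut[OF sh \<open>a \<in> automs X\<close>] by (simp add: H_def)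
    qed
  next
    fix a b assume "a \<in> H" "b \<in> H"
    then show "a \<otimes>\<^bsub>Aut_group X\<^esub> b \<in> H"
      using comp_autom[OF sh] PX by (auto simp: H_def)
  qed
  show "H \<lhd> Aut_group X"
    unfolding G.normal_inv_iff
  proof (intro conjI sub ballI)
    fix x h assume x: "x \<in> carrier (Aut_group X)" and h: "h \<in> H"
    have xa: "x \<in> automs X" using x by simp
    have ix: "inv\<^bsub>Aut_group X\<^esub> x \<in> automs X" using inv_closed_aut[OF sh xa] .
    have "(x \<otimes>\<^bsub>Aut_group X\<^esub> h \<otimes>\<^bsub>Aut_group X\<^esub> inv\<^bsub>Aut_group X\<^esub> x) y = y" if y: "y \<in> P" for y
    proof -
      have iy: "(inv\<^bsub>Aut_group X\<^esub> x) y \<in> P" using inv[OF ix y] .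
      then have "h ((inv\<^bsub>Aut_group X\<^esub> x) y) = (inv\<^bsub>Aut_group X\<^esub> x) y" using h by (simp add: H_def)
      moreover have "(inv\<^bsub>Aut_group X\<^esub> x) y \<in> X" using iy PX by blast
      ultimately show ?thesis using inv_apply[OF sh xa, of y] y PX by auto
    qed
    moreover have "x \<otimes>\<^bsub>Aut_group X\<^esub> h \<otimes>\<^bsub>Aut_group X\<^esub> inv\<^bsub>Aut_group X\<^esub> x \<in> automs X"
      using x h ix sub subgroup.mem_carrier by (metis G.m_closed Aut_simps(1) G.inv_closed)
    ultimately show "x \<otimes>\<^bsub>Aut_group X\<^esub> h \<otimes>\<^bsub>Aut_group X\<^esub> inv\<^bsub>Aut_group X\<^esub> x \<in> H"
      by (simp add: H_def)
  qed
  define R where "R f = restrict f P" for f :: "(int \<Rightarrow> 'a) \<Rightarrow> (int \<Rightarrow> 'a)"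
  define C where "C \<phi> = H #>\<^bsub>Aut_group X\<^esub> (SOME f. f \<in> automs X \<and> R f = \<phi>)" for \<phi>
  have eq: "H #>\<^bsub>Aut_group X\<^esub> f = H #>\<^bsub>Aut_group X\<^esub> g"
    if f: "f \<in> automs X" and g: "g \<in> automs X" and fg: "R f = R g" for f g
  proof -
    have "g \<otimes>\<^bsub>Aut_group X\<^esub> inv\<^bsub>Aut_group X\<^esub> f \<in> H"
    proof -
      have ifa: "inv\<^bsub>Aut_group X\<^esub> f \<in> automs X" using inv_closed_aut[OF sh f] .
      have "(g \<otimes>\<^bsub>Aut_group X\<^esub> inv\<^bsub>Aut_group X\<^esub> f) y = y" if y: "y \<in> P" for y
      proof -
        have iy: "(inv\<^bsub>Aut_group X\<^esub> f) y \<in> P" using inv[OF ifa y] .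
        then have "g ((inv\<^bsub>Aut_group X\<^esub> f) y) = f ((inv\<^bsub>Aut_group X\<^esub> f) y)"
          using fg unfolding R_def by (metis restrict_apply')
        then show ?thesis using inv_apply[OF sh f, of y] y PX by auto
      qed
      moreover have "g \<otimes>\<^bsub>Aut_group X\<^esub> inv\<^bsub>Aut_group X\<^esub> f \<in> automs X"
        using comp_autom[OF sh g ifa] by simp
      ultimately show ?thesis by (simp add: H_def)
    qed
    then have "g \<in> H #>\<^bsub>Aut_group X\<^esub> f"
      using subgroup.rcos_module_rev[OF sub G.is_group] f g by simp
    then show ?thesis using G.repr_independence[OF _ _ sub] f by simp
  qed
  have "rcosets\<^bsub>Aut_group X\<^esub> H \<subseteq> C ` (R ` automs X)"
  proof
    fix c assume "c \<in> rcosets\<^bsub>Aut_group X\<^esub> H"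
    then obtain f where f: "f \<in> automs X" and c: "c = H #>\<^bsub>Aut_group X\<^esub> f"
      unfolding RCOSETS_def by auto
    define f' where "f' = (SOME f'. f' \<in> automs X \<and> R f' = R f)"
    have "f' \<in> automs X \<and> R f' = R f" unfolding f'_def by (rule someI[of _ f]) (use f in auto)
    then have "C (R f) = c" unfolding C_def c f'_def[symmetric] using eq f by metis
    then show "c \<in> C ` (R ` automs X)" using f by blast
  qed
  moreover have "R ` automs X \<subseteq> Pi\<^sub>E P (\<lambda>_. P)"
    using inv by (auto simp: R_def)
  moreover have "finite (Pi\<^sub>E P (\<lambda>_. P))" using fin by (simp add: finite_PiE)
  ultimately show "finite (rcosets\<^bsub>Aut_group X\<^esub> H)"
    by (meson finite_imageI finite_subset)
qed



lemma cont_window: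
  assumes c: "continuous_map (subtopology fullshift_top X) (subtopology fullshift_top X) f"
    and x: "x \<in> X"
  shows "\<exists>N::int. \<forall>y\<in>X. (\<forall>j. \<bar>j\<bar> \<le> N \<longrightarrow> y j = x j) \<longrightarrow> f y i = f x i"
proof -
  have c1: "continuous_map (subtopology fullshift_top X) fullshift_top f"
    using c continuous_map_in_subtopology by blast
  have c2: "continuous_map (subtopology fullshift_top X) (discrete_topology UNIV) (\<lambda>y. f y i)"
    using c1 unfolding fullshift_top_def continuous_map_componentwise_UNIV by blast
  have "openin (subtopology fullshift_top X) {y \<in> topspace (subtopology fullshift_top X). f y i \<in> {f x i}}"
    by (rule openin_continuous_map_preimage[OF c2]) simp
  then have "openin (subtopology fullshift_top X) {y \<in> X. f y i = f x i}"
    unfolding topspace_T by simp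
  then obtain T where T: "openin fullshift_top T" and TX: "{y \<in> X. f y i = f x i} = T \<inter> X"
    unfolding openin_subtopology by blast
  have "x \<in> T" using TX x by blast
  then obtain U where U: "finite {j \<in> (UNIV::int set). U j \<noteq> topspace (discrete_topology (UNIV::'a set))}"
     "x \<in> Pi\<^sub>E UNIV U" "Pi\<^sub>E UNIV U \<subseteq> T"
    using T unfolding fullshift_top_def openin_product_topology_alt by blast
  define J where "J = {j \<in> (UNIV::int set). U j \<noteq> UNIV}"
  have finJ: "finite J" using U(1) by (simp add: J_def)
  define N where "N = Max (insert 0 (abs ` J))"
  show ?thesis
  proof (intro exI ballI impI)
    fix y assume y: "y \<in> X" and agree: "\<forall>j. \<bar>j\<bar> \<le> N \<longrightarrow> y j = x j"
    have "y j \<in> U j" for j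
    proof (cases "j \<in> J")
      case True
      then have "\<bar>j\<bar> \<le> N" unfolding N_def using finJ by (intro Max_ge) auto
      then have "y j = x j" using agree by blast
      then show ?thesis using U(2) by (auto simp: PiE_iff)
    next
      case False
      then show ?thesis by (auto simp: J_def)
    qed
    then have "y \<in> Pi\<^sub>E UNIV U" by (auto simp: PiE_iff)
    then have "y \<in> T" using U(3) by blast
    then show "f y i = f x i" using TX y by blast
  qed
qed



fun SW :: "('a \<Rightarrow> 'a list set) \<Rightarrow> nat \<Rightarrow> 'a list \<Rightarrow> 'a list set" where
  "SW \<theta> 0 w = {w}"
| "SW \<theta> (Suc q) w = \<Union> (subst_word \<theta> ` SW \<theta> q w)"

lemma subst_word_append:
  "u' \<in> subst_word \<theta> u \<Longrightarrow> v' \<in> subst_word \<theta> v \<Longrightarrow> u' @ v' \<in> subst_word \<theta> (u @ v)"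
proof (induction u arbitrary: u')
  case Nil then show ?case by simp
next
  case (Cons a u)
  then obtain p r where "u' = p @ r" "p \<in> \<theta> a" "r \<in> subst_word \<theta> u" by auto
  then show ?case using Cons.IH[of r] Cons.prems(2) by force
qed

lemma subst_pow_SW: "subst_pow \<theta> q a = SW \<theta> q [a]"
  by (induction q) auto

lemma SW_add: "x \<in> SW \<theta> p w \<Longrightarrow> y \<in> SW \<theta> q x \<Longrightarrow> y \<in> SW \<theta> (p + q) w"
proof (induction q arbitrary: y)
  case 0 then show ?case by simp
next
  case (Suc q)
  then obtain y' where "y' \<in> SW \<theta> q x" "y \<in> subst_word \<theta> y'" by auto
  then show ?case using Suc.IH[of y'] Suc.prems(1) by auto
qed

lemma SW_append: "u' \<in> SW \<theta> q u \<Longrightarrow> v' \<in> SW \<theta> q v \<Longrightarrow> u' @ v' \<in> SW \<theta> q (u @ v)"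
proof (induction q arbitrary: u' v')
  case 0 then show ?case by simp
next
  case (Suc q)
  then obtain u1 v1 where "u1 \<in> SW \<theta> q u" "u' \<in> subst_word \<theta> u1" "v1 \<in> SW \<theta> q v" "v' \<in> subst_word \<theta> v1"
    by auto
  then show ?case using Suc.IH[of u1 v1] subst_word_append[of u' \<theta> u1 v' v1] by auto
qed

lemma subst_word_ne: "random_subst \<theta> \<Longrightarrow> subst_word \<theta> w \<noteq> {}"
proof (induction w)
  case Nil then show ?case by simp
next
  case (Cons a w)
  then obtain r where "r \<in> subst_word \<theta> w" by auto
  moreover obtain p where "p \<in> \<theta> a" using Cons.prems unfolding random_subst_def by blast
  ultimately show ?case by auto
qed

lemma SW_ne: "random_subst \<theta> \<Longrightarrow> SW \<theta> q w \<noteq> {}"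
proof (induction q)
  case 0 then show ?case by simp
next
  case (Suc q)
  then obtain r where "r \<in> SW \<theta> q w" by auto
  moreover obtain p where "p \<in> subst_word \<theta> r" using subst_word_ne[OF Suc.prems] by blast
  ultimately show ?case by auto
qed

lemma concat_map_SW:
  assumes "\<And>c. ch c \<in> SW \<theta> m [c]"
  shows "concat (map ch z) \<in> SW \<theta> m z"
proof (induction z)
  case Nil
  have "[] \<in> SW \<theta> m []" by (induction m) force+
  then show ?case by simp
next
  case (Cons c z)
  then show ?case using SW_append[OF assms[of c] Cons.IH] by simp
qed

lemma legal_concat_map:
  assumes "\<And>c. ch c \<in> SW \<theta> m [c]" and "legal \<theta> u"
  shows "legal \<theta> (concat (map ch u))"
proof -
  obtain a r z where z: "z \<in> subst_pow \<theta> r a" "sublist u z" using assms(2) unfolding legal_def by blast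
  then obtain s t where st: "z = s @ u @ t" unfolding sublist_def by blast
  have "concat (map ch z) \<in> SW \<theta> m z" by (rule concat_map_SW[OF assms(1)])
  then have "concat (map ch z) \<in> SW \<theta> (r + m) [a]" using z(1) SW_add subst_pow_SW by metis
  moreover have "concat (map ch z) = concat (map ch s) @ concat (map ch u) @ concat (map ch t)"
    using st by simp
  ultimately show ?thesis unfolding legal_def subst_pow_SW by (metis sublist_appendI)
qed

lemma legal_sublist: "legal \<theta> w \<Longrightarrow> sublist v w \<Longrightarrow> legal \<theta> v"
  unfolding legal_def by (meson sublist_order.order_trans)

lemma legal_in_image:
  assumes rs: "random_subst \<theta>" and pr: "primitive_subst \<theta>" and "legal \<theta> u"
  shows "\<exists>m V0. V0 \<in> SW \<theta> m [b] \<and> sublist u V0"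
proof -
  obtain a q z where z: "z \<in> SW \<theta> q [a]" "sublist u z" using assms(3) unfolding legal_def subst_pow_SW by blast
  obtain p where "\<forall>a b. \<exists>w\<in>subst_pow \<theta> p b. a \<in> set w" using pr unfolding primitive_subst_def by blast
  then obtain w' where w': "w' \<in> SW \<theta> p [b]" "a \<in> set w'" unfolding subst_pow_SW by blast
  then obtain s t where st: "w' = s @ [a] @ t" by (metis split_list append_Cons append_Nil)
  obtain s' where s': "s' \<in> SW \<theta> q s" using SW_ne[OF rs] by blast
  obtain t' where t': "t' \<in> SW \<theta> q t" using SW_ne[OF rs] by blast
  have "s' @ z @ t' \<in> SW \<theta> q w'" using st SW_append[OF s' SW_append[OF z(1) t']] by simp
  then have "s' @ z @ t' \<in> SW \<theta> (p + q) [b]" using SW_add w'(1) by blast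
  moreover have "sublist u (s' @ z @ t')" using z(2) by (meson sublist_appendI sublist_order.order_trans)
  ultimately show ?thesis by blast
qed

lemma nth_concat_replicate:
  assumes "j < k * length V"
  shows "concat (replicate k V) ! j = V ! (j mod length V)"
  using assms
proof (induction k arbitrary: j)
  case 0 then show ?case by simp
next
  case (Suc k)
  show ?case
  proof (cases "j < length V")
    case True then show ?thesis by (simp add: nth_append)
  next
    case False
    then have "j - length V < k * length V" using Suc.prems by simp
    then have "concat (replicate k V) ! (j - length V) = V ! ((j - length V) mod length V)"
      using Suc.IH by blast
    moreover have "(j - length V) mod length V = j mod length V"
      using False by (simp add: mod_if)
    ultimately show ?thesis using False by (simp add: nth_append)
  qed
qed

lemma shift_pow: "(shift ^^ n) x = (\<lambda>i. x (i + int n))"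
  by (induction n) (auto simp: shift_def algebra_simps)

lemma subshift_shift: "shift ` subshift \<theta> \<subseteq> subshift \<theta>"
proof
  fix y assume "y \<in> shift ` subshift \<theta>"
  then obtain x where x: "x \<in> subshift \<theta>" "y = shift x" by blast
  have "legal \<theta> (map (\<lambda>k. y (i + int k)) [0..<n])" for i n
  proof -
    have eq: "map (\<lambda>k. y (i + int k)) [0..<n] = map (\<lambda>k. x ((i + 1) + int k)) [0..<n]"
      using x(2) by (intro map_cong) (simp_all add: shift_def algebra_simps)
    have leg: "legal \<theta> (map (\<lambda>k. x ((i + 1) + int k)) [0..<n])"
      using x(1) unfolding subshift_def by blast
    show ?thesis unfolding eq using leg .
  qed
  then show "y \<in> subshift \<theta>" unfolding subshift_def by blast
qed

lemma periodic_nat: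
  assumes "(shift ^^ n) x = x"
  shows "x (i + int n * int k) = x i"
proof (induction k)
  case 0 then show ?case by simp
next
  case (Suc k)
  have "x (i + int n * int (Suc k)) = x ((i + int n * int k) + int n)" by (simp add: algebra_simps)
  also have "\<dots> = x (i + int n * int k)" using assms by (metis shift_pow)
  finally show ?case using Suc by simp
qed

lemma periodic_mod:
  assumes "(shift ^^ n) x = x" "n \<ge> 1"
  shows "x (int j) = x (int (j mod n))"
proof -
  have "int j = int (j mod n) + int n * int (j div n)"
    by (metis of_nat_add of_nat_mult mod_div_mult_eq add.commute mult.commute)
  then show ?thesis using periodic_nat[OF assms(1)] by metis
qed



lemma density:
  assumes rs: "random_subst \<theta>" and pr: "primitive_subst \<theta>"
    and x0: "x0 \<in> subshift \<theta>" "(shift ^^ n0) x0 = x0" "n0 \<ge> 1"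
    and x: "x \<in> subshift \<theta>"
  shows "\<exists>z\<in>subshift \<theta>. \<exists>n\<ge>1. (shift ^^ n) z = z \<and> (\<forall>j. \<bar>j\<bar> \<le> int M \<longrightarrow> z j = x j)"
proof -
  define w where "w = map (\<lambda>k. x0 (int k)) [0..<n0]"
  have lw: "length w = n0" by (simp add: w_def)
  have w_ne: "w \<noteq> []" using lw x0(3) by auto
  have wk: "legal \<theta> (concat (replicate k w))" for k
  proof -
    have "concat (replicate k w) = map (\<lambda>j. x0 (0 + int j)) [0..<k*n0]"
    proof (rule nth_equalityI)
      show "length (concat (replicate k w)) = length (map (\<lambda>j. x0 (0 + int j)) [0..<k*n0])"
        using lw by (simp add: length_concat sum_list_replicate)
      fix j assume "j < length (concat (replicate k w))"
      then have j: "j < k * n0" using lw by (simp add: length_concat sum_list_replicate)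
      have "concat (replicate k w) ! j = w ! (j mod n0)" using nth_concat_replicate[of j k w] j lw by simp
      also have "\<dots> = x0 (int (j mod n0))" using x0(3) by (simp add: w_def)
      also have "\<dots> = x0 (int j)" using periodic_mod[OF x0(2,3)] by simp
      finally show "concat (replicate k w) ! j = map (\<lambda>j. x0 (0 + int j)) [0..<k*n0] ! j" using j by simp
    qed
    moreover have "legal \<theta> (map (\<lambda>j. x0 (0 + int j)) [0..<k*n0])" using x0(1) unfolding subshift_def by blast
    ultimately show ?thesis by simp
  qed
  define u where "u = map (\<lambda>k. x (- int M + int k)) [0..<2*M+1]"
  have lu: "legal \<theta> u" using x unfolding subshift_def u_def by blast
  obtain m V0 where V0: "V0 \<in> SW \<theta> m [hd w]" "sublist u V0" using legal_in_image[OF rs pr lu] by blast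
  define ch where "ch c = (if c = hd w then V0 else (SOME v. v \<in> SW \<theta> m [c]))" for c
  have ch: "ch c \<in> SW \<theta> m [c]" for c
  proof (cases "c = hd w")
    case True then show ?thesis using V0 by (simp add: ch_def)
  next
    case False
    have "\<exists>v. v \<in> SW \<theta> m [c]" using SW_ne[OF rs] by blast
    then have "(SOME v. v \<in> SW \<theta> m [c]) \<in> SW \<theta> m [c]" by (rule someI_ex)
    then show ?thesis using False unfolding ch_def by simp
  qed
  define V where "V = concat (map ch w)"
  have Vk: "concat (map ch (concat (replicate k w))) = concat (replicate k V)" for k
    by (induction k) (simp_all add: V_def)
  have legV: "legal \<theta> (concat (replicate k V))" for k
    using legal_concat_map[OF ch wk[of k]] Vk by simp
  have "V = V0 @ concat (map ch (tl w))"
    using w_ne unfolding V_def by (cases w) (simp_all add: ch_def)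
  then have "sublist u V" using V0(2) by (meson sublist_append_rightI sublist_order.order_trans)
  then obtain s t where st: "V = s @ u @ t" unfolding sublist_def by blast
  have lu2: "length u = 2*M+1" by (simp add: u_def)
  define L where "L = length V"
  have L1: "L \<ge> 1" using st lu2 by (simp add: L_def)
  define c where "c = int (length s) + int M"
  define z where "z i = V ! nat ((i + c) mod int L)" for i
  have per: "(shift ^^ L) z = z"
  proof
    fix i
    have "(i + int L + c) mod int L = (i + c) mod int L"
      by (metis add.commute add.left_commute mod_add_self2)
    then show "(shift ^^ L) z i = z i" by (simp add: shift_pow z_def)
  qed
  have agree: "z j = x j" if j: "\<bar>j\<bar> \<le> int M" for j
  proof -
    define k where "k = nat (j + int M)"
    have k: "k < 2*M+1" "int k = j + int M" using j by (auto simp: k_def)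
    have "j + c = int (length s + k)" using k by (simp add: c_def)
    moreover have "length s + k < L" using st k lu2 by (simp add: L_def)
    ultimately have "nat ((j + c) mod int L) = length s + k"
      by (metis nat_int of_nat_less_iff zmod_int mod_less)
    then have "z j = V ! (length s + k)" by (simp add: z_def)
    also have "\<dots> = u ! k" using st k lu2 by (simp add: nth_append)
    also have "\<dots> = x (- int M + int k)" using k(1) by (simp add: u_def del: upt_Suc)
    also have "\<dots> = x j" using k by simp
    finally show ?thesis .
  qed
  have zin: "z \<in> subshift \<theta>"
    unfolding subshift_def
  proof (intro CollectI allI)
    fix i :: int and n :: nat
    define r where "r = nat ((i + c) mod int L)"
    define W where "W = concat (replicate (r + n) V)"
    have lW: "length W = (r + n) * L" by (simp add: W_def L_def length_concat sum_list_replicate)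
    have rn: "r + n \<le> length W" using L1 lW by (metis mult.right_neutral mult_le_mono2)
    have "map (\<lambda>k. z (i + int k)) [0..<n] = take n (drop r W)"
    proof (rule nth_equalityI)
      show "length (map (\<lambda>k. z (i + int k)) [0..<n]) = length (take n (drop r W))" using rn by simp
      fix k assume "k < length (map (\<lambda>k. z (i + int k)) [0..<n])"
      then have k: "k < n" by simp
      have rk: "r + k < (r + n) * L" using rn k lW by linarith
      have "take n (drop r W) ! k = W ! (r + k)" using k rn by simp
      also have "\<dots> = V ! ((r + k) mod L)"
        unfolding W_def L_def by (rule nth_concat_replicate) (use rk in \<open>simp add: L_def\<close>)
      also have "(r + k) mod L = nat ((i + int k + c) mod int L)"
      proof -
        have "int ((r + k) mod L) = (int r + int k) mod int L" by (simp add: zmod_int)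
        also have "\<dots> = ((i + c) mod int L + int k) mod int L" using L1 by (simp add: r_def)
        also have "\<dots> = (i + int k + c) mod int L" by (metis mod_add_left_eq add.commute add.left_commute)
        finally show ?thesis by simp
      qed
      finally show "map (\<lambda>k. z (i + int k)) [0..<n] ! k = take n (drop r W) ! k"
        using k by (simp add: z_def)
    qed
    moreover have "sublist (take n (drop r W)) W"
      by (meson sublist_drop sublist_take sublist_order.order_trans)
    ultimately show "legal \<theta> (map (\<lambda>k. z (i + int k)) [0..<n])"
      using legal_sublist legV unfolding W_def by metis
  qed
  show ?thesis using zin per L1 agree by blast
qed



lemma shift_pow_in: "shift ` X \<subseteq> X \<Longrightarrow> y \<in> X \<Longrightarrow> (shift ^^ n) y \<in> X"
  by (induction n) auto

lemma autom_shift_pow: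
  assumes "shift ` X \<subseteq> X" "f \<in> automs X" "y \<in> X"
  shows "f ((shift ^^ n) y) = (shift ^^ n) (f y)"
proof (induction n)
  case 0 then show ?case by simp
next
  case (Suc n)
  have "f ((shift ^^ Suc n) y) = f (shift ((shift ^^ n) y))" by simp
  also have "\<dots> = shift (f ((shift ^^ n) y))"
    using automsD(2)[OF assms(2)] shift_pow_in[OF assms(1,3)] by blast
  finally show ?case using Suc by simp
qed

lemma periodic_int:
  assumes "(shift ^^ n) x = x"
  shows "x (i + int n * k) = x i"
proof (cases "k \<ge> 0")
  case True
  then obtain k' where "k = int k'" by (metis nonneg_int_cases)
  then show ?thesis using periodic_nat[OF assms] by simp
next
  case False
  define k' where "k' = nat (- k)"
  have k': "k = - int k'" using False by (simp add: k'_def)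
  have "x ((i + int n * k) + int n * int k') = x (i + int n * k)" using periodic_nat[OF assms] by blast
  then show ?thesis using k' by (simp add: algebra_simps)
qed

lemma finite_periodic:
  assumes "n \<ge> 1"
  shows "finite {y :: int \<Rightarrow> 'a::finite. (shift ^^ n) y = y}"
proof -
  let ?P = "{y :: int \<Rightarrow> 'a. (shift ^^ n) y = y}"
  let ?F = "\<lambda>y::int \<Rightarrow> 'a. map (\<lambda>k. y (int k)) [0..<n]"
  have inj: "inj_on ?F ?P"
  proof
    fix y y' assume y: "y \<in> ?P" and y': "y' \<in> ?P" and eq: "?F y = ?F y'"
    show "y = y'"
    proof
      fix j :: int
      have j: "j = int (nat (j mod int n)) + int n * (j div int n)" using assms by simp
      have lt: "nat (j mod int n) < n" using assms by (simp add: nat_less_iff)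
      have "\<forall>m\<in>{0..<n}. y (int m) = y' (int m)" using eq by simp
      then have e: "y (int (nat (j mod int n))) = y' (int (nat (j mod int n)))"
        using lt by (meson atLeastLessThan_iff zero_le)
      have "y j = y (int (nat (j mod int n)) + int n * (j div int n))" using j by simp
      also have "\<dots> = y (int (nat (j mod int n)))" using periodic_int[of n y] y by simp
      also have "\<dots> = y' (int (nat (j mod int n)))" by (rule e)
      also have "\<dots> = y' (int (nat (j mod int n)) + int n * (j div int n))"
        using periodic_int[of n y'] y' by simp
      also have "\<dots> = y' j" using j by simp
      finally show "y j = y' j" .
    qed
  qed
  have "?F ` ?P \<subseteq> {xs. set xs \<subseteq> UNIV \<and> length xs = n}" by auto
  moreover have "finite {xs. set xs \<subseteq> (UNIV::'a set) \<and> length xs = n}"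
    by (rule finite_lists_length_eq) simp
  ultimately have "finite (?F ` ?P)" by (rule finite_subset)
  then show ?thesis using inj finite_imageD by blast
qed

theorem corollary6p1:
  fixes \<theta> :: "'a::finite \<Rightarrow> 'a list set"
  assumes "random_subst \<theta>"
    and "primitive_subst \<theta>"
    and "\<exists>x\<in>subshift \<theta>. \<exists>n\<ge>1. (shift ^^ n) x = x"
  shows "residually_finite (Aut_group (subshift \<theta>))"
  unfolding residually_finite_def
proof (intro ballI impI)
  define X where "X = subshift \<theta>"
  have sh: "shift ` X \<subseteq> X" unfolding X_def by (rule subshift_shift)
  fix g assume gc: "g \<in> carrier (Aut_group (subshift \<theta>))" and gne: "g \<noteq> \<one>\<^bsub>Aut_group (subshift \<theta>)\<^esub>"
  have g: "g \<in> automs X" using gc by (simp add: X_def)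
  obtain x where x: "x \<in> X" "g x \<noteq> x"
  proof (rule ccontr)
    assume "\<not> thesis"
    then have "\<forall>x\<in>X. g x = x" using that by blast
    then have "g = restrict id X" using automsD(3)[OF g] by (auto simp: fun_eq_iff extensional_def)
    then show False using gne by (simp add: X_def)
  qed
  then obtain i where i: "g x i \<noteq> x i" by auto
  have cont: "continuous_map (subtopology fullshift_top X) (subtopology fullshift_top X) g"
    using automsD(1)[OF g] homeomorphic_imp_continuous_map by blast
  obtain N where N: "\<forall>y\<in>X. (\<forall>j. \<bar>j\<bar> \<le> N \<longrightarrow> y j = x j) \<longrightarrow> g y i = g x i"
    using cont_window[OF cont x(1)] by blast
  define M where "M = nat (max N \<bar>i\<bar>)"
  obtain x0 n0 where x0: "x0 \<in> subshift \<theta>" "n0 \<ge> 1" "(shift ^^ n0) x0 = x0" using assms(3) by blast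
  obtain z n where z: "z \<in> X" "n \<ge> 1" "(shift ^^ n) z = z" "\<forall>j. \<bar>j\<bar> \<le> int M \<longrightarrow> z j = x j"
    using density[OF assms(1,2) x0(1,3,2), of x M] x(1) unfolding X_def by blast
  have "\<forall>j. \<bar>j\<bar> \<le> N \<longrightarrow> z j = x j"
  proof (intro allI impI)
    fix j assume "\<bar>j\<bar> \<le> N"
    then have "\<bar>j\<bar> \<le> int M" unfolding M_def by linarith
    then show "z j = x j" using z(4) by blast
  qed
  then have "g z i = g x i" using N z(1) by blast
  moreover have "\<bar>i\<bar> \<le> int M" unfolding M_def by linarith
  then have "z i = x i" using z(4) by blast
  ultimately have gz: "g z \<noteq> z" using i by metis
  define P where "P = {y \<in> X. (shift ^^ n) y = y}"
  have PX: "P \<subseteq> X" by (auto simp: P_def)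
  have finP: "finite P"
    using finite_periodic[OF z(2), where 'a='a] by (rule finite_subset[rotated]) (auto simp: P_def)
  have inv: "f y \<in> P" if "f \<in> automs X" "y \<in> P" for f y
    using that autom_shift_pow[OF sh, of f y n] autom_in[of f X y] by (auto simp: P_def)
  define H where "H = {f \<in> automs X. \<forall>y\<in>P. f y = y}"
  have "H \<lhd> Aut_group X" unfolding H_def
    by (rule kernel_normal_finite(1)[of X P, OF sh PX finP]) (simp add: inv)
  moreover have "finite (rcosets\<^bsub>Aut_group X\<^esub> H)" unfolding H_def
    by (rule kernel_normal_finite(2)[of X P, OF sh PX finP]) (simp add: inv)
  moreover have "g \<notin> H" using gz z unfolding H_def P_def by blast
  ultimately show "\<exists>N. N \<lhd> Aut_group (subshift \<theta>) \<and> finite (rcosets\<^bsub>Aut_group (subshift \<theta>)\<^esub> N) \<and> g \<notin> N"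
    unfolding X_def by blast
qed

end
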